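(* Let $F$ be a digraph and let $a$ be an arc of $F$. If $F-a$ is $\vec{\chi}$-maderian, then $F$ is $\vec{\chi}$-maderian and $\mathrm{mad}_{\vec{\chi}}(F)\le 4\cdot\mathrm{mad}_{\vec{\chi}}(F-a)-3$.
   Context: $\vec{\chi}(D)$, the dichromatic number, is the least $k$ such that $V(D)$ can be partitioned into $k$ sets each inducing an acyclic subdigraph. A subdivision of $F$ is obtained by replacing each arc $(x,y)$ by a directed $(x,y)$-path, internally disjoint with new internal vertices. $F$ is $\vec{\chi}$-maderian if there is an integer $c$ such that every digraph $D$ with $\vec{\chi}(D)\ge c$ contains a subdivision of $F$ as a subdigraph; $\mathrm{mad}_{\vec{\chi}}(F)$ is the least such $c$. *)

theory Defs
  imports Main
begin

text \<open>A (finite, loopless) digraph is a pair (V, A) of a vertex set and an arc set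
  A \<subseteq> V \<times> V without loops. Digons (opposite arcs) are allowed, parallel arcs are not.\<close>

type_synonym 'a digraph = "'a set \<times> ('a \<times> 'a) set"

definition verts :: "'a digraph \<Rightarrow> 'a set" where "verts D = fst D"
definition arcs :: "'a digraph \<Rightarrow> ('a \<times> 'a) set" where "arcs D = snd D"

definition is_digraph :: "'a digraph \<Rightarrow> bool" where
  "is_digraph D \<longleftrightarrow> finite (verts D) \<and> arcs D \<subseteq> verts D \<times> verts D
     \<and> (\<forall>x. (x, x) \<notin> arcs D)"

definition del_arc :: "'a digraph \<Rightarrow> 'a \<times> 'a \<Rightarrow> 'a digraph" where
  "del_arc D a = (verts D, arcs D - {a})"

definition induces_acyclic :: "'a digraph \<Rightarrow> 'a set \<Rightarrow> bool" where
  "induces_acyclic D S \<longleftrightarrow> acyclic (arcs D \<inter> (S \<times> S))"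

definition dicolouring :: "'a digraph \<Rightarrow> nat \<Rightarrow> ('a \<Rightarrow> nat) \<Rightarrow> bool" where
  "dicolouring D k f \<longleftrightarrow> (\<forall>v\<in>verts D. f v < k)
     \<and> (\<forall>i<k. induces_acyclic D {v \<in> verts D. f v = i})"

definition dichromatic :: "'a digraph \<Rightarrow> nat" where
  "dichromatic D = (LEAST k. \<exists>f. dicolouring D k f)"

definition dpath :: "'b digraph \<Rightarrow> 'b list \<Rightarrow> 'b \<Rightarrow> 'b \<Rightarrow> bool" where
  "dpath D p x y \<longleftrightarrow> length p \<ge> 2 \<and> distinct p \<and> hd p = x \<and> last p = y
     \<and> (\<forall>i. Suc i < length p \<longrightarrow> (p ! i, p ! Suc i) \<in> arcs D)"

definition internal :: "'b list \<Rightarrow> 'b set" where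
  "internal p = set (butlast (tl p))"

definition contains_subdivision :: "'b digraph \<Rightarrow> 'a digraph \<Rightarrow> bool" where
  "contains_subdivision D F \<longleftrightarrow> (\<exists>\<phi> P.
     inj_on \<phi> (verts F) \<and> \<phi> ` verts F \<subseteq> verts D
     \<and> (\<forall>(x, y) \<in> arcs F. dpath D (P (x, y)) (\<phi> x) (\<phi> y)
          \<and> internal (P (x, y)) \<inter> \<phi> ` verts F = {})
     \<and> (\<forall>e \<in> arcs F. \<forall>e' \<in> arcs F. e \<noteq> e' \<longrightarrow> internal (P e) \<inter> internal (P e') = {}))"

text \<open>Digraphs D range over all finite digraphs; up to isomorphism these may be taken on
  vertex type nat.\<close>
definition maderian_bound :: "'a digraph \<Rightarrow> nat \<Rightarrow> bool" where
  "maderian_bound F c \<longleftrightarrow> (\<forall>D :: nat digraph. is_digraph D \<longrightarrow> dichromatic D \<ge> c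
       \<longrightarrow> contains_subdivision D F)"

definition maderian :: "'a digraph \<Rightarrow> bool" where
  "maderian F \<longleftrightarrow> (\<exists>c. maderian_bound F c)"

definition mad :: "'a digraph \<Rightarrow> nat" where
  "mad F = (LEAST c. maderian_bound F c)"

end

theory Submission
  imports Defs
begin


definition dst :: "('b \<times> 'b) set \<Rightarrow> 'b \<Rightarrow> 'b \<Rightarrow> nat" where
  "dst A x y = (LEAST n. (x,y) \<in> A ^^ n)"

lemma dst_pow: "(x,y) \<in> A\<^sup>* \<Longrightarrow> (x,y) \<in> A ^^ dst A x y"
  unfolding dst_def by (metis LeastI_ex rtrancl_power)

lemma dst_le: "(x,y) \<in> A ^^ n \<Longrightarrow> dst A x y \<le> n"
  unfolding dst_def by (rule Least_le)

lemma dst0: "dst A x y = 0 \<Longrightarrow> (x,y) \<in> A\<^sup>* \<Longrightarrow> x = y"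
  using dst_pow by fastforce

lemma walk_to: "(w,r) \<in> A^^m \<Longrightarrow> (w,r) \<in> (A \<inter> UNIV \<times> {v. dst A v r < m})\<^sup>*"
proof (induction m arbitrary: w)
  case 0 then show ?case by simp
next
  case (Suc m)
  then obtain w' where w': "(w,w') \<in> A" "(w',r) \<in> A^^m" by (meson relpow_Suc_D2)
  have "(w',r) \<in> (A \<inter> UNIV \<times> {v. dst A v r < m})\<^sup>*" using Suc.IH w'(2) by blast
  also have "\<dots> \<subseteq> (A \<inter> UNIV \<times> {v. dst A v r < Suc m})\<^sup>*" by (rule rtrancl_mono) auto
  finally have 1: "(w',r) \<in> (A \<inter> UNIV \<times> {v. dst A v r < Suc m})\<^sup>*" .
  have "(w,w') \<in> A \<inter> UNIV \<times> {v. dst A v r < Suc m}" using w' dst_le[OF w'(2)] by auto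
  then show ?case using 1 by (meson converse_rtrancl_into_rtrancl)
qed

lemma walk_from: "(r,y) \<in> A^^m \<Longrightarrow> (r,y) \<in> (A \<inter> {v. dst A r v < m} \<times> UNIV)\<^sup>*"
proof (induction m arbitrary: y)
  case 0 then show ?case by simp
next
  case (Suc m)
  then obtain y' where y': "(r,y') \<in> A^^m" "(y',y) \<in> A" by auto
  have "(r,y') \<in> (A \<inter> {v. dst A r v < m} \<times> UNIV)\<^sup>*" using Suc.IH y'(1) by blast
  also have "\<dots> \<subseteq> (A \<inter> {v. dst A r v < Suc m} \<times> UNIV)\<^sup>*" by (rule rtrancl_mono) auto
  finally have 1: "(r,y') \<in> (A \<inter> {v. dst A r v < Suc m} \<times> UNIV)\<^sup>*" .
  have "(y',y) \<in> A \<inter> {v. dst A r v < Suc m} \<times> UNIV" using y' dst_le[OF y'(1)] by auto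
  then show ?case using 1 by (meson rtrancl_into_rtrancl)
qed

lemma dist_path:
  assumes "(x,y) \<in> E\<^sup>+"
  shows "x \<noteq> y \<Longrightarrow> \<exists>p. length p \<ge> 2 \<and> distinct p \<and> hd p = x \<and> last p = y
           \<and> (\<forall>i. Suc i < length p \<longrightarrow> (p!i, p!Suc i) \<in> E)"
  using assms
proof (induction rule: converse_trancl_induct)
  case (base x)
  then show ?case by (intro exI[of _ "[x,y]"]) (auto simp: less_Suc_eq)
next
  case (step x z)
  show ?case
  proof (cases "z = y")
    case True
    then show ?thesis using step by (intro exI[of _ "[x,y]"]) (auto simp: less_Suc_eq)
  next
    case False
    then obtain q where q: "length q \<ge> 2" "distinct q" "hd q = z" "last q = y"
      "\<forall>i. Suc i < length q \<longrightarrow> (q!i, q!Suc i) \<in> E" using step by blast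
    show ?thesis
    proof (cases "x \<in> set q")
      case True
      then obtain k where k: "k < length q" "q!k = x" by (meson in_set_conv_nth)
      have ne: "drop k q \<noteq> []" using k by simp
      have "last (drop k q) = y" using q k by (simp add: last_drop)
      moreover have "hd (drop k q) = x" using k by (simp add: hd_drop_conv_nth)
      moreover have "length (drop k q) \<ge> 2"
      proof (rule ccontr)
        assume "\<not> ?thesis"
        then have "length (drop k q) = 1" using ne by (cases "length (drop k q)") auto
        then have "drop k q = [hd (drop k q)]" by (cases "drop k q") simp_all
        then show False using calculation step(4) by (metis last.simps)
      qed
      moreover have "distinct (drop k q)" using q by simp
      moreover have "\<forall>i. Suc i < length (drop k q) \<longrightarrow> (drop k q!i, drop k q!Suc i) \<in> E"
        using q(5) by auto
      ultimately show ?thesis by blast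
    next
      case False
      have "q \<noteq> []" using q by auto
      moreover have "\<forall>i. Suc i < length (x#q) \<longrightarrow> ((x#q)!i, (x#q)!Suc i) \<in> E"
      proof (intro allI impI)
        fix i assume "Suc i < length (x#q)"
        then show "((x#q)!i, (x#q)!Suc i) \<in> E"
          using q step(1) \<open>q \<noteq> []\<close> by (cases i) (auto simp: hd_conv_nth)
      qed
      ultimately show ?thesis using q False by (intro exI[of _ "x#q"]) auto
    qed
  qed
qed

lemma cyc_L:
  assumes "(x,y) \<in> R\<^sup>+"
  shows "(y,x) \<in> R\<^sup>* \<Longrightarrow> x \<in> Y \<Longrightarrow> (\<forall>z. (x,z) \<in> R\<^sup>+ \<longrightarrow> (z,x) \<in> R\<^sup>* \<longrightarrow> z \<in> Y)
     \<Longrightarrow> (x,y) \<in> (R \<inter> Y \<times> Y)\<^sup>+"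
  using assms
proof (induction rule: trancl_induct)
  case (base y)
  then show ?case by blast
next
  case (step y z)
  have "(y,x) \<in> R\<^sup>*" using step by (meson converse_rtrancl_into_rtrancl)
  then have 1: "(x,y) \<in> (R \<inter> Y \<times> Y)\<^sup>+" using step by blast
  have "y \<in> Y" using step \<open>(y,x) \<in> R\<^sup>*\<close> by blast
  moreover have "(x,z) \<in> R\<^sup>+" using step by auto
  then have "z \<in> Y" using step by blast
  ultimately show ?case using 1 step by (meson IntI SigmaI trancl.trancl_into_trancl)
qed



lemma dpath_mono: "dpath D' p x y \<Longrightarrow> arcs D' \<subseteq> arcs D \<Longrightarrow> dpath D p x y"
  unfolding dpath_def by blast

lemma sub_mono:
  assumes "contains_subdivision D' F" "verts D' \<subseteq> verts D" "arcs D' \<subseteq> arcs D"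
  shows "contains_subdivision D F"
proof -
  obtain \<phi> P where h: "inj_on \<phi> (verts F)" "\<phi> ` verts F \<subseteq> verts D'"
     "\<forall>(x, y) \<in> arcs F. dpath D' (P (x, y)) (\<phi> x) (\<phi> y)
          \<and> internal (P (x, y)) \<inter> \<phi> ` verts F = {}"
     "\<forall>e \<in> arcs F. \<forall>e' \<in> arcs F. e \<noteq> e' \<longrightarrow> internal (P e) \<inter> internal (P e') = {}"
    using assms(1) unfolding contains_subdivision_def by (elim exE conjE) (rule that)
  have "\<forall>(x, y) \<in> arcs F. dpath D (P (x, y)) (\<phi> x) (\<phi> y)
          \<and> internal (P (x, y)) \<inter> \<phi> ` verts F = {}"
  proof (intro ballI, clarify)
    fix x y assume xy: "(x,y) \<in> arcs F"
    then have "dpath D' (P (x, y)) (\<phi> x) (\<phi> y) \<and> internal (P (x, y)) \<inter> \<phi> ` verts F = {}"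
      using h(3) by blast
    then show "dpath D (P (x, y)) (\<phi> x) (\<phi> y) \<and> internal (P (x, y)) \<inter> \<phi> ` verts F = {}"
      using dpath_mono[OF _ assms(3)] by blast
  qed
  moreover have "\<phi> ` verts F \<subseteq> verts D" using h(2) assms(2) by blast
  ultimately show ?thesis unfolding contains_subdivision_def using h(1) h(4)
    by (intro exI[of _ \<phi>] exI[of _ P]) simp
qed

lemma internal_sub: "internal p \<subseteq> set p"
  unfolding internal_def by (cases p) (auto dest: in_set_butlastD)

lemma dpath_set:
  assumes "dpath D p x y" "arcs D \<subseteq> S \<times> S"
  shows "set p \<subseteq> S"
proof
  fix v assume "v \<in> set p"
  then obtain i where i: "i < length p" "p!i = v" by (meson in_set_conv_nth)
  have L: "length p \<ge> 2" "\<forall>i. Suc i < length p \<longrightarrow> (p ! i, p ! Suc i) \<in> arcs D"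
    using assms(1) unfolding dpath_def by auto
  show "v \<in> S"
  proof (cases "Suc i < length p")
    case True
    then show ?thesis using L assms(2) i by blast
  next
    case False
    then have "Suc (i - 1) < length p" "Suc (i-1) = i" using i L by auto
    then show ?thesis using L assms(2) i by (metis mem_Sigma_iff subsetD)
  qed
qed

lemma extend:
  assumes F: "is_digraph F" "a \<in> arcs F"
    and S: "S \<subseteq> verts D"
    and paths: "\<forall>x\<in>S. \<forall>y\<in>S. x \<noteq> y \<longrightarrow> (\<exists>p. dpath D p x y \<and> internal p \<inter> S = {})"
    and sub: "contains_subdivision (S, arcs D \<inter> S \<times> S) (del_arc F a)"
  shows "contains_subdivision D F"
proof -
  let ?DS = "(S, arcs D \<inter> S \<times> S)"
  have vF: "verts (del_arc F a) = verts F" "arcs (del_arc F a) = arcs F - {a}"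
    by (auto simp: del_arc_def verts_def arcs_def)
  have vDS: "verts ?DS = S" "arcs ?DS = arcs D \<inter> S \<times> S" by (auto simp: verts_def arcs_def)
  obtain \<phi> P where h: "inj_on \<phi> (verts F)" "\<phi> ` verts F \<subseteq> S"
     "\<forall>(x, y) \<in> arcs F - {a}. dpath ?DS (P (x, y)) (\<phi> x) (\<phi> y)
          \<and> internal (P (x, y)) \<inter> \<phi> ` verts F = {}"
     "\<forall>e \<in> arcs F - {a}. \<forall>e' \<in> arcs F - {a}. e \<noteq> e' \<longrightarrow> internal (P e) \<inter> internal (P e') = {}"
    using sub unfolding contains_subdivision_def vF vDS by (elim exE conjE) (rule that)
  obtain u v where a: "a = (u,v)" by fastforce
  have uv: "u \<in> verts F" "v \<in> verts F" "u \<noteq> v"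
    using F a unfolding is_digraph_def by auto
  then have "\<phi> u \<noteq> \<phi> v" "\<phi> u \<in> S" "\<phi> v \<in> S" using h(1,2) by (auto dest: inj_onD)
  then obtain p where p: "dpath D p (\<phi> u) (\<phi> v)" "internal p \<inter> S = {}" using paths by blast
  define P' where "P' = P(a := p)"
  have setP: "set (P e) \<subseteq> S" if "e \<in> arcs F - {a}" for e
  proof -
    obtain x y where "e = (x,y)" by fastforce
    then have "dpath ?DS (P e) (\<phi> x) (\<phi> y)" using h(3) that by auto
    then show ?thesis using dpath_set[of ?DS "P e"] vDS by auto
  qed
  have A1: "\<forall>(x, y) \<in> arcs F. dpath D (P' (x, y)) (\<phi> x) (\<phi> y)
          \<and> internal (P' (x, y)) \<inter> \<phi> ` verts F = {}"
  proof (intro ballI, clarify)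
    fix x y assume xy: "(x,y) \<in> arcs F"
    show "dpath D (P' (x, y)) (\<phi> x) (\<phi> y) \<and> internal (P' (x, y)) \<inter> \<phi> ` verts F = {}"
    proof (cases "(x,y) = a")
      case True
      then show ?thesis using p h(2) a unfolding P'_def by auto
    next
      case False
      then have "dpath ?DS (P (x, y)) (\<phi> x) (\<phi> y) \<and> internal (P (x, y)) \<inter> \<phi> ` verts F = {}"
      proof -
        have "(x,y) \<in> arcs F - {a}" using xy False by blast
        then show ?thesis using h(3) by blast
      qed
      then show ?thesis using False unfolding P'_def dpath_def vDS by auto
    qed
  qed
  have A2: "\<forall>e \<in> arcs F. \<forall>e' \<in> arcs F. e \<noteq> e' \<longrightarrow> internal (P' e) \<inter> internal (P' e') = {}"
  proof (intro ballI impI)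
    fix e e' assume e: "e \<in> arcs F" "e' \<in> arcs F" "e \<noteq> e'"
    show "internal (P' e) \<inter> internal (P' e') = {}"
    proof (cases "e = a")
      case True
      then have "e' \<in> arcs F - {a}" using e by auto
      then show ?thesis using True setP[of e'] internal_sub[of "P e'"] p(2) e unfolding P'_def by auto
    next
      case False
      note F1 = False
      show ?thesis
      proof (cases "e' = a")
        case True
        then show ?thesis using F1 setP[of e] internal_sub[of "P e"] p(2) e unfolding P'_def by auto
      next
        case False
        then show ?thesis using F1 h(4) e unfolding P'_def by auto
      qed
    qed
  qed
  have "\<phi> ` verts F \<subseteq> verts D" using h(2) S by blast
  then show ?thesis unfolding contains_subdivision_def
    using h(1) A1 A2 by (intro exI[of _ \<phi>] exI[of _ P']) simp
qed

lemma cell_paths: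
  fixes D :: "'b digraph"
  assumes "S \<subseteq> {v. (r,v) \<in> (arcs D)\<^sup>* \<and> (v,r) \<in> (arcs D)\<^sup>* \<and> dst (arcs D) r v = i \<and> dst (arcs D) v r = j}"
    and "x \<in> S" "y \<in> S" "x \<noteq> y"
  shows "\<exists>p. dpath D p x y \<and> internal p \<inter> S = {}"
proof -
  let ?A = "arcs D"
  let ?E = "?A \<inter> (-S \<union> {x}) \<times> (-S \<union> {y})"
  have xr: "(x,r) \<in> ?A\<^sup>*" "dst ?A x r = j" "(r,y) \<in> ?A\<^sup>*" "dst ?A r y = i"
      "(r,x) \<in> ?A\<^sup>*" "dst ?A r x = i"
    using assms by auto
  have "i \<noteq> 0"
  proof
    assume "i = 0"
    then have "x = r" "y = r" using xr dst0 by metis+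
    then show False using assms by simp
  qed
  then have rS: "r \<notin> S" using assms(1) dst_le[where x=r and y=r and A="arcs D" and n=0] by auto
  then have xnr: "x \<noteq> r" "y \<noteq> r" using assms by auto
  have w1: "(x,r) \<in> (?A \<inter> UNIV \<times> {v. dst ?A v r < j})\<^sup>*"
    using walk_to[OF dst_pow[OF xr(1)]] xr(2) by simp
  have w2: "(r,y) \<in> (?A \<inter> {v. dst ?A r v < i} \<times> UNIV)\<^sup>*"
    using walk_from[OF dst_pow[OF xr(3)]] xr(4) by simp
  have t1: "(x,r) \<in> (?A \<inter> UNIV \<times> {v. dst ?A v r < j})\<^sup>+"
    using w1 xnr by (meson rtranclD)
  have t2: "(r,y) \<in> (?A \<inter> {v. dst ?A r v < i} \<times> UNIV)\<^sup>+"
    using w2 xnr by (metis rtranclD)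
  have g1: "(x,z) \<in> ?E\<^sup>+ \<and> z \<notin> S" if "(x,z) \<in> (?A \<inter> UNIV \<times> {v. dst ?A v r < j})\<^sup>+" for z
    using that
  proof (induction rule: trancl_induct)
    case (base z)
    then have "z \<notin> S" using assms(1) by auto
    then show ?case using base by auto
  next
    case (step z z')
    then have "z' \<notin> S" using assms(1) by auto
    then show ?case using step by (auto intro: trancl_into_trancl)
  qed
  have g2: "(z,y) \<in> ?E\<^sup>+ \<and> z \<notin> S" if "(z,y) \<in> (?A \<inter> {v. dst ?A r v < i} \<times> UNIV)\<^sup>+" for z
    using that
  proof (induction rule: converse_trancl_induct)
    case (base z)
    then have "z \<notin> S" using assms(1) by auto
    then show ?case using base by auto
  next
    case (step z z')
    then have "z \<notin> S" using assms(1) by auto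
    then show ?case using step by (auto intro: trancl_into_trancl2)
  qed
  have "(x,y) \<in> ?E\<^sup>+" using g1[OF t1] g2[OF t2] by (meson trancl_trans)
  from dist_path[OF this assms(4)] obtain p where p: "length p \<ge> 2" "distinct p" "hd p = x"
    "last p = y" "\<forall>i. Suc i < length p \<longrightarrow> (p!i, p!Suc i) \<in> ?E" by blast
  have "dpath D p x y" using p unfolding dpath_def by auto
  moreover have "internal p \<inter> S = {}"
  proof (rule ccontr)
    assume "internal p \<inter> S \<noteq> {}"
    then obtain z where z: "z \<in> set (butlast (tl p))" "z \<in> S" unfolding internal_def by auto
    then obtain m where m: "m < length (butlast (tl p))" "butlast (tl p) ! m = z"
      by (meson in_set_conv_nth)
    have len: "length (butlast (tl p)) = length p - 2" by simp
    have zz: "z = p ! Suc m" using m len p(1)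
      by (simp add: nth_butlast nth_tl)
    have "(p!m, p!Suc m) \<in> ?E" using p(5) m len by auto
    then have "z \<in> -S \<union> {y}" using zz by auto
    then have "z = y" using z by auto
    moreover have "y = p ! (length p - 1)" using p(4) p(1) by (metis last_conv_nth list.size(3) not_numeral_le_zero)
    moreover have "Suc m \<noteq> length p - 1" using m len by auto
    moreover have "Suc m < length p" "length p - 1 < length p" using m len p(1) by auto
    ultimately show False using zz p(2) nth_eq_iff_index_eq by metis
  qed
  ultimately show ?thesis by blast
qed



lemma colouring_exists:
  assumes "is_digraph D" shows "\<exists>f. dicolouring D (card (verts D)) f"
proof -
  obtain f where f: "bij_betw f (verts D) {0..<card (verts D)}"
    using assms ex_bij_betw_finite_nat unfolding is_digraph_def by blast
  have "induces_acyclic D {v \<in> verts D. f v = i}" for i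
  proof -
    have "arcs D \<inter> {v \<in> verts D. f v = i} \<times> {v \<in> verts D. f v = i} = {}"
    proof (rule ccontr)
      assume "\<not> ?thesis"
      then obtain x y where "(x,y) \<in> arcs D" "x \<in> verts D" "y \<in> verts D" "f x = i" "f y = i" by auto
      moreover have "inj_on f (verts D)" using f bij_betw_def by blast
      ultimately show False using assms unfolding is_digraph_def by (metis inj_onD)
    qed
    then show ?thesis unfolding induces_acyclic_def by (simp add: acyclic_def)
  qed
  moreover have "\<forall>v\<in>verts D. f v < card (verts D)" using f bij_betwE by fastforce
  ultimately show ?thesis unfolding dicolouring_def by blast
qed

lemma dicol_mono:
  assumes "dicolouring D m g" "m \<le> n" shows "dicolouring D n g"
proof -
  have "induces_acyclic D {v \<in> verts D. g v = i}" if "i < n" for i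
  proof (cases "i < m")
    case True then show ?thesis using assms unfolding dicolouring_def by blast
  next
    case False
    then have "{v \<in> verts D. g v = i} = {}" using assms unfolding dicolouring_def by force
    then have "arcs D \<inter> {v \<in> verts D. g v = i} \<times> {v \<in> verts D. g v = i} = {}" by blast
    then show ?thesis unfolding induces_acyclic_def by (simp add: acyclic_def)
  qed
  then show ?thesis using assms unfolding dicolouring_def by auto
qed

lemma dichro_col: assumes "is_digraph D" shows "\<exists>g. dicolouring D (dichromatic D) g"
proof -
  have "\<exists>k. Ex (dicolouring D k)" using colouring_exists[OF assms] by blast
  then show ?thesis unfolding dichromatic_def by (rule LeastI_ex)
qed

lemma dichro_le: "dicolouring D k g \<Longrightarrow> dichromatic D \<le> k"
  unfolding dichromatic_def by (rule Least_le) blast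

lemma trancl_tgt: "(x,z) \<in> (A \<inter> T \<times> T)\<^sup>+ \<Longrightarrow> z \<in> T"
  by (induction rule: trancl_induct) auto

lemma par_eq:
  fixes g1 g2 i1 i2 j1 j2 :: nat
  assumes "4*g1 + 2*(i1 mod 2) + j1 mod 2 = 4*g2 + 2*(i2 mod 2) + j2 mod 2"
  shows "g1 = g2 \<and> i1 mod 2 = i2 mod 2 \<and> j1 mod 2 = j2 mod 2"
proof -
  have b: "i1 mod 2 < 2" "i2 mod 2 < 2" "j1 mod 2 < 2" "j2 mod 2 < 2" by auto
  have "\<And>q1 q2 s1 s2::nat. q1 < 2 \<Longrightarrow> q2 < 2 \<Longrightarrow> s1 < 2 \<Longrightarrow> s2 < 2 \<Longrightarrow>
     4*g1 + 2*q1 + s1 = 4*g2 + 2*q2 + s2 \<Longrightarrow> g1 = g2 \<and> q1 = q2 \<and> s1 = s2" by presburger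
  from this[OF b(1,2,3,4) assms] show ?thesis .
qed



lemma trancl_tgt2: "(x,z) \<in> R\<^sup>+ \<Longrightarrow> R \<subseteq> UNIV \<times> T \<Longrightarrow> z \<in> T"
  by (induction rule: trancl_induct) auto

lemma par_le: "(b::nat) \<le> Suc a \<Longrightarrow> a mod 2 = b mod 2 \<Longrightarrow> b \<le> a"
  by presburger

lemma main_col:
  fixes F :: "'a digraph" and m :: nat
  assumes F: "is_digraph F" "a \<in> arcs F" and mb: "maderian_bound (del_arc F a) m"
  shows "is_digraph (D::nat digraph) \<Longrightarrow> \<not> contains_subdivision D F \<Longrightarrow> \<exists>h. dicolouring D (4*m-4) h"
proof (induction "card (verts D)" arbitrary: D rule: less_induct)
  case less
  let ?V = "verts D"
  let ?A = "arcs D"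
  show ?case
  proof (cases "?V = {}")
    case True
    then have "?A = {}" using less.prems unfolding is_digraph_def by auto
    then show ?thesis unfolding dicolouring_def induces_acyclic_def using True
      by (intro exI[of _ "\<lambda>_. 0"]) (auto simp: acyclic_def)
  next
    case False
    then obtain r where r: "r \<in> ?V" by blast
    define C where "C = {v \<in> ?V. (r,v) \<in> ?A\<^sup>* \<and> (v,r) \<in> ?A\<^sup>*}"
    define D' :: "nat digraph" where "D' = (?V - C, ?A \<inter> (?V - C) \<times> (?V - C))"
    have vD': "verts D' = ?V - C" "arcs D' = ?A \<inter> (?V - C) \<times> (?V - C)"
      by (simp_all add: D'_def verts_def arcs_def)
    have rC: "r \<in> C" using r C_def by auto
    have fin: "finite ?V" using less.prems unfolding is_digraph_def by auto
    have "?V - C \<subset> ?V" using rC r C_def by auto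
    then have "card (verts D') < card ?V" using vD' fin by (simp add: psubset_card_mono)
    moreover have "is_digraph D'" using less.prems(1) vD' fin unfolding is_digraph_def by auto
    moreover have "\<not> contains_subdivision D' F"
    proof
      assume "contains_subdivision D' F"
      moreover have "verts D' \<subseteq> ?V" "arcs D' \<subseteq> ?A" using vD' by auto
      ultimately have "contains_subdivision D F" by (rule sub_mono)
      then show False using less.prems(2) by simp
    qed
    ultimately obtain f1 where f1: "dicolouring D' (4*m-4) f1" using less.hyps by blast
    define ci where "ci v = dst ?A r v" for v
    define cj where "cj v = dst ?A v r" for v
    define cell where "cell i j = {v \<in> C. ci v = i \<and> cj v = j}" for i j
    define Dc :: "nat \<Rightarrow> nat \<Rightarrow> nat digraph" where "Dc i j = (cell i j, ?A \<inter> cell i j \<times> cell i j)" for i j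
    have vDc: "verts (Dc i j) = cell i j" "arcs (Dc i j) = ?A \<inter> cell i j \<times> cell i j" for i j
      by (simp_all add: Dc_def verts_def arcs_def)
    have cellcol: "\<exists>g. dicolouring (Dc i j) (m-1) g" for i j
    proof -
      have cV: "cell i j \<subseteq> ?V" unfolding cell_def C_def by auto
      have dg: "is_digraph (Dc i j)" using less.prems(1) cV fin vDc unfolding is_digraph_def
        by (auto intro: finite_subset)
      have "\<not> dichromatic (Dc i j) \<ge> m"
      proof
        assume "m \<le> dichromatic (Dc i j)"
        then have "contains_subdivision (Dc i j) (del_arc F a)"
          using mb dg unfolding maderian_bound_def by blast
        then have 1: "contains_subdivision (cell i j, ?A \<inter> cell i j \<times> cell i j) (del_arc F a)"
          unfolding Dc_def .
        have sub: "cell i j \<subseteq> {v. (r,v) \<in> ?A\<^sup>* \<and> (v,r) \<in> ?A\<^sup>* \<and> dst ?A r v = i \<and> dst ?A v r = j}"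
          unfolding cell_def C_def ci_def cj_def by auto
        have "\<forall>x\<in>cell i j. \<forall>y\<in>cell i j. x \<noteq> y \<longrightarrow> (\<exists>p. dpath D p x y \<and> internal p \<inter> cell i j = {})"
          using cell_paths[OF sub] by blast
        then have "contains_subdivision D F" using extend[OF F cV _ 1] by blast
        then show False using less.prems(2) by blast
      qed
      then have "dichromatic (Dc i j) \<le> m - 1" by simp
      then show ?thesis using dichro_col[OF dg] dicol_mono by blast
    qed
    then obtain G where G: "\<And>i j. dicolouring (Dc i j) (m-1) (G i j)" by metis
    define h where "h v = (if v \<in> C then 4 * G (ci v) (cj v) v + 2*(ci v mod 2) + cj v mod 2 else f1 v)" for v
    have bound: "\<forall>v\<in>?V. h v < 4*m-4"
    proof
      fix v assume v: "v \<in> ?V"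
      show "h v < 4*m-4"
      proof (cases "v \<in> C")
        case True
        then have "v \<in> verts (Dc (ci v) (cj v))" using vDc cell_def by auto
        then have g: "G (ci v) (cj v) v < m-1" using G unfolding dicolouring_def by blast
        have "ci v mod 2 \<le> 1" "cj v mod 2 \<le> 1" by auto
        then have "h v \<le> 4 * G (ci v) (cj v) v + 3" using True unfolding h_def by auto
        also have "\<dots> < 4*m-4" using g by linarith
        finally show ?thesis .
      next
        case False
        then show ?thesis using f1 v vD' unfolding dicolouring_def h_def by auto
      qed
    qed
    have acyc: "induces_acyclic D {v \<in> ?V. h v = c}" if c: "c < 4*m-4" for c
    proof -
      define T where "T = {v \<in> ?V. h v = c}"
      let ?R = "?A \<inter> T \<times> T"
      have "(x,x) \<notin> ?R\<^sup>+" for x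
      proof
        assume cyc: "(x,x) \<in> ?R\<^sup>+"
        have RA: "?R\<^sup>* \<subseteq> ?A\<^sup>*" by (rule rtrancl_mono) auto
        have xT: "x \<in> T" using trancl_tgt cyc by metis
        have closeC: "z \<in> C \<longleftrightarrow> x \<in> C" if "(x,z) \<in> ?R\<^sup>+" "(z,x) \<in> ?R\<^sup>*" for z
        proof -
          have "(x,z) \<in> ?A\<^sup>*" "(z,x) \<in> ?A\<^sup>*" using that RA trancl_into_rtrancl by auto
          moreover have "z \<in> ?V" "x \<in> ?V" using that trancl_tgt[of x z ?A T] xT T_def by auto
          ultimately show ?thesis unfolding C_def using rtrancl_trans[of r x ?A z] rtrancl_trans[of z x ?A r]
              rtrancl_trans[of r z ?A x] rtrancl_trans[of x z ?A r] by blast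
        qed
        have zT: "z \<in> T" if "(x,z) \<in> ?R\<^sup>+" for z using that by (rule trancl_tgt)
        show False
        proof (cases "x \<in> C")
          case False
          have "(x,x) \<in> (?R \<inter> (T - C) \<times> (T - C))\<^sup>+"
          proof (rule cyc_L[OF cyc])
            show "(x,x) \<in> ?R\<^sup>*" by simp
            show "x \<in> T - C" using False xT by simp
            show "\<forall>z. (x,z) \<in> ?R\<^sup>+ \<longrightarrow> (z,x) \<in> ?R\<^sup>* \<longrightarrow> z \<in> T - C"
              using zT closeC False by blast
          qed
          moreover have "?R \<inter> (T - C) \<times> (T - C) \<subseteq>
              arcs D' \<inter> {v \<in> verts D'. f1 v = c} \<times> {v \<in> verts D'. f1 v = c}"
          proof
            fix p assume p: "p \<in> ?R \<inter> (T - C) \<times> (T - C)"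
            obtain u w where uw: "p = (u,w)" by fastforce
            have "f1 v = c" if "v \<in> T - C" for v using that unfolding T_def h_def by auto
            then show "p \<in> arcs D' \<inter> {v \<in> verts D'. f1 v = c} \<times> {v \<in> verts D'. f1 v = c}"
              using p uw vD' unfolding T_def by auto
          qed
          ultimately have "(x,x) \<in> (arcs D' \<inter> {v \<in> verts D'. f1 v = c} \<times> {v \<in> verts D'. f1 v = c})\<^sup>+"
            using trancl_mono by blast
          moreover have "induces_acyclic D' {v \<in> verts D'. f1 v = c}" using f1 c unfolding dicolouring_def by blast
          ultimately show False unfolding induces_acyclic_def acyclic_def by blast
        next
          case True
          let ?R1 = "?A \<inter> (T \<inter> C) \<times> (T \<inter> C)"
          have "(x,x) \<in> (?R \<inter> (T \<inter> C) \<times> (T \<inter> C))\<^sup>+"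
          proof (rule cyc_L[OF cyc])
            show "(x,x) \<in> ?R\<^sup>*" by simp
            show "x \<in> T \<inter> C" using True xT by simp
            show "\<forall>z. (x,z) \<in> ?R\<^sup>+ \<longrightarrow> (z,x) \<in> ?R\<^sup>* \<longrightarrow> z \<in> T \<inter> C"
              using zT closeC True by blast
          qed
          moreover have "?R \<inter> (T \<inter> C) \<times> (T \<inter> C) = ?R1" by auto
          ultimately have c1: "(x,x) \<in> ?R1\<^sup>+" by simp
          have arcmono: "ci b \<le> ci a \<and> cj a \<le> cj b" if "(a,b) \<in> ?R1" for a b
          proof -
            have ab: "(a,b) \<in> ?A" "a \<in> C" "b \<in> C" "h a = c" "h b = c" using that unfolding T_def by auto
            have "(r,a) \<in> ?A ^^ ci a" using ab(2) unfolding C_def ci_def using dst_pow by auto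
            then have "(r,b) \<in> ?A ^^ Suc (ci a)" using ab(1) by (rule relpow_Suc_I)
            then have 1: "ci b \<le> Suc (ci a)" unfolding ci_def by (rule dst_le)
            have "(b,r) \<in> ?A ^^ cj b" using ab(3) unfolding C_def cj_def using dst_pow by auto
            then have "(a,r) \<in> ?A ^^ Suc (cj b)" by (rule relpow_Suc_I2[OF ab(1)])
            then have 2: "cj a \<le> Suc (cj b)" unfolding cj_def by (rule dst_le)
            have "4 * G (ci a) (cj a) a + 2*(ci a mod 2) + cj a mod 2
                = 4 * G (ci b) (cj b) b + 2*(ci b mod 2) + cj b mod 2"
              using ab unfolding h_def by simp
            then have "ci a mod 2 = ci b mod 2 \<and> cj a mod 2 = cj b mod 2" by (rule par_eq[THEN conjunct2])
            then have "ci a mod 2 = ci b mod 2" "cj b mod 2 = cj a mod 2" by auto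
            then show ?thesis using par_le[OF 1] par_le[OF 2] by blast
          qed
          have mono: "ci b \<le> ci a \<and> cj a \<le> cj b" if "(a,b) \<in> ?R1\<^sup>*" for a b
            using that
          proof (induction rule: rtrancl_induct)
            case base then show ?case by simp
          next
            case (step y z)
            have "ci z \<le> ci y \<and> cj y \<le> cj z" by (rule arcmono[OF step(2)])
            then show ?case using step(3) by (meson le_trans)
          qed
          define i0 where "i0 = ci x"
          define j0 where "j0 = cj x"
          let ?Y = "T \<inter> cell i0 j0"
          have c2: "(x,x) \<in> (?R1 \<inter> ?Y \<times> ?Y)\<^sup>+"
          proof (rule cyc_L[OF c1])
            show "(x,x) \<in> ?R1\<^sup>*" by simp
            show "x \<in> ?Y" using xT True unfolding cell_def i0_def j0_def by auto
            show "\<forall>z. (x,z) \<in> ?R1\<^sup>+ \<longrightarrow> (z,x) \<in> ?R1\<^sup>* \<longrightarrow> z \<in> ?Y"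
            proof (intro allI impI)
              fix z assume z: "(x,z) \<in> ?R1\<^sup>+" "(z,x) \<in> ?R1\<^sup>*"
              have "z \<in> T \<inter> C" using trancl_tgt[OF z(1)] .
              moreover have m1: "ci z \<le> ci x \<and> cj x \<le> cj z" by (rule mono[OF trancl_into_rtrancl[OF z(1)]])
              moreover have m2: "ci x \<le> ci z \<and> cj z \<le> cj x" by (rule mono[OF z(2)])
              ultimately have "z \<in> T" "z \<in> C" "ci z = i0" "cj z = j0" unfolding i0_def j0_def by auto
              then show "z \<in> ?Y" unfolding cell_def by blast
            qed
          qed
          define g0 where "g0 = G i0 j0 x"
          let ?T2 = "{v \<in> verts (Dc i0 j0). G i0 j0 v = g0}"
          have "?R1 \<inter> ?Y \<times> ?Y \<subseteq> arcs (Dc i0 j0) \<inter> ?T2 \<times> ?T2"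
          proof
            fix p assume p: "p \<in> ?R1 \<inter> ?Y \<times> ?Y"
            obtain u w where uw: "p = (u,w)" by fastforce
            have Gv: "G i0 j0 v = g0" if "v \<in> ?Y" for v
            proof -
              have v: "v \<in> C" "ci v = i0" "cj v = j0" "h v = c" using that unfolding cell_def T_def by auto
              have "x \<in> C" "ci x = i0" "cj x = j0" "h x = c" using True xT unfolding i0_def j0_def T_def by auto
              then have "4 * G i0 j0 v + 2*(i0 mod 2) + j0 mod 2 = 4 * G i0 j0 x + 2*(i0 mod 2) + j0 mod 2"
                using v unfolding h_def by simp
              then show ?thesis unfolding g0_def by simp
            qed
            have "u \<in> ?Y" "w \<in> ?Y" "(u,w) \<in> ?A" using p uw by auto
            then have "u \<in> ?T2" "w \<in> ?T2" "(u,w) \<in> arcs (Dc i0 j0)" using Gv vDc by auto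
            then show "p \<in> arcs (Dc i0 j0) \<inter> ?T2 \<times> ?T2" using uw by blast
          qed
          then have "(x,x) \<in> (arcs (Dc i0 j0) \<inter> ?T2 \<times> ?T2)\<^sup>+" using c2 trancl_mono by blast
          moreover have "x \<in> verts (Dc i0 j0)" using True vDc unfolding cell_def i0_def j0_def by auto
          then have "g0 < m - 1" using G unfolding g0_def dicolouring_def by blast
          then have "induces_acyclic (Dc i0 j0) ?T2" using G unfolding dicolouring_def by blast
          ultimately show False unfolding induces_acyclic_def acyclic_def by blast
        qed
      qed
      then show ?thesis unfolding induces_acyclic_def acyclic_def T_def by blast
    qed
    show ?thesis using bound acyc unfolding dicolouring_def by blast
  qed
qed


theorem lemma31:
  fixes F :: "'a digraph" and a :: "'a \<times> 'a"
  assumes "is_digraph F"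
    and "a \<in> arcs F"
    and "maderian (del_arc F a)"
  shows "maderian F \<and> mad F \<le> 4 * mad (del_arc F a) - 3"
proof -
  define m where "m = mad (del_arc F a)"
  have mb: "maderian_bound (del_arc F a) m"
    using assms(3) unfolding maderian_def mad_def m_def by (metis LeastI_ex)
  have vF: "verts (del_arc F a) = verts F" by (simp add: del_arc_def verts_def)
  have "verts F \<noteq> {}" using assms(1,2) unfolding is_digraph_def by auto
  have m1: "m \<ge> 1"
  proof (rule ccontr)
    assume "\<not> m \<ge> 1"
    then have m0: "m = 0" by simp
    define D0 :: "nat digraph" where "D0 = ({}, {})"
    have "is_digraph D0" unfolding D0_def is_digraph_def verts_def arcs_def by simp
    moreover from mb have "is_digraph D0 \<longrightarrow> m \<le> dichromatic D0 \<longrightarrow> contains_subdivision D0 (del_arc F a)"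
      unfolding maderian_bound_def by (rule spec)
    ultimately have "contains_subdivision D0 (del_arc F a)" using m0 by simp
    then obtain \<phi> where "\<phi> ` verts (del_arc F a) \<subseteq> verts D0" unfolding contains_subdivision_def
      by (elim exE conjE) (rule that)
    then show False using \<open>verts F \<noteq> {}\<close> vF unfolding D0_def verts_def by auto
  qed
  have mbF: "maderian_bound F (4*m-3)"
    unfolding maderian_bound_def
  proof (intro allI impI)
    fix D :: "nat digraph"
    assume D: "is_digraph D" "4*m-3 \<le> dichromatic D"
    show "contains_subdivision D F"
    proof (rule ccontr)
      assume "\<not> contains_subdivision D F"
      then obtain h where "dicolouring D (4*m-4) h" using main_col[OF assms(1,2) mb D(1)] by blast
      then have "dichromatic D \<le> 4*m-4" by (rule dichro_le)
      then show False using D(2) m1 by linarith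
    qed
  qed
  then have "maderian F" unfolding maderian_def by blast
  moreover have "mad F \<le> 4*m-3" unfolding mad_def using mbF by (rule Least_le)
  ultimately show ?thesis unfolding m_def by blast
qed

end
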